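(* Let $\mathcal{A}$ be a complex Banach algebra with unity, $a\in\mathcal{A}$ and $k$ a positive integer. Then $a$ is g$\pi$-Hirano invertible if and only if $a^{k}$ is g$\pi$-Hirano invertible.
   Context: $\mathcal{A}^{qnil}$ denotes the set of quasinilpotent elements of $\mathcal{A}$ (spectrum equal to $\{0\}$). An element $a\in\mathcal{A}$ is g$\pi$-Hirano invertible if there exists $x\in\mathcal{A}$ with $xax=x$, $ax=xa$ and $a-a^{n+2}x\in\mathcal{A}^{qnil}$ for some positive integer $n$. *)

theory Defs
  imports "HOL-Analysis.Analysis"
begin

class complex_banach_algebra_1 = real_normed_algebra_1 + banach +
  fixes scaleC :: "complex \<Rightarrow> 'a \<Rightarrow> 'a"
  assumes scaleC_add_right: "scaleC c (x + y) = scaleC c x + scaleC c y"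
    and scaleC_add_left: "scaleC (b + c) x = scaleC b x + scaleC c x"
    and scaleC_scaleC: "scaleC b (scaleC c x) = scaleC (b * c) x"
    and scaleC_one: "scaleC 1 x = x"
    and scaleR_scaleC: "scaleR r x = scaleC (complex_of_real r) x"
    and norm_scaleC: "norm (scaleC c x) = cmod c * norm x"
    and mult_scaleC_left: "scaleC c x * y = scaleC c (x * y)"
    and mult_scaleC_right: "x * scaleC c y = scaleC c (x * y)"

definition alg_invertible :: "'a::ring_1 \<Rightarrow> bool" where
  "alg_invertible u \<longleftrightarrow> (\<exists>v. u * v = 1 \<and> v * u = 1)"

definition spectrum :: "'a::complex_banach_algebra_1 \<Rightarrow> complex set" where
  "spectrum a = {z. \<not> alg_invertible (scaleC z 1 - a)}"

definition quasinilpotent :: "'a::complex_banach_algebra_1 \<Rightarrow> bool" where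
  "quasinilpotent a \<longleftrightarrow> spectrum a = {0}"

definition gpi_Hirano_invertible :: "'a::complex_banach_algebra_1 \<Rightarrow> bool" where
  "gpi_Hirano_invertible a \<longleftrightarrow>
     (\<exists>x. x * a * x = x \<and> a * x = x * a \<and>
          (\<exists>n::nat. n > 0 \<and> quasinilpotent (a - a ^ (n + 2) * x)))"

end

theory Submission imports Defs "HOL-Computational_Algebra.Fundamental_Theorem_Algebra" begin

lemma inv_one: "alg_invertible (1::'a::ring_1)"
  unfolding alg_invertible_def by (rule exI[of _ 1]) simp

lemma inv_mult:
  fixes a b :: "'a::ring_1"
  assumes "alg_invertible a" "alg_invertible b"
  shows "alg_invertible (a * b)"
proof -
  obtain a' where a: "a * a' = 1" "a' * a = 1" using assms(1) unfolding alg_invertible_def by blast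
  obtain b' where b: "b * b' = 1" "b' * b = 1" using assms(2) unfolding alg_invertible_def by blast
  have "a * b * (b' * a') = 1" by (metis a(1) b(1) mult.assoc mult_1_left)
  moreover have "(b' * a') * (a * b) = 1" by (metis a(2) b(2) mult.assoc mult_1_left)
  ultimately show ?thesis unfolding alg_invertible_def by blast
qed

lemma inv_left_right:
  fixes a :: "'a::ring_1"
  assumes "w * a = 1" "a * v = 1"
  shows "alg_invertible a"
proof -
  have "w = v" by (metis assms mult.assoc mult_1_left mult_1_right)
  then show ?thesis using assms unfolding alg_invertible_def by blast
qed

lemma inv_comm_factor:
  fixes a b :: "'a::ring_1"
  assumes "a * b = b * a" "alg_invertible (a * b)"
  shows "alg_invertible a" "alg_invertible b"
proof -
  obtain v where v: "a * b * v = 1" "v * (a * b) = 1" using assms(2) unfolding alg_invertible_def by blast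
  have "a * (b * v) = 1" using v by (simp add: mult.assoc)
  moreover have "(v * b) * a = 1" using v assms(1) by (simp add: mult.assoc)
  ultimately show "alg_invertible a" by (rule inv_left_right[rotated])
  have "b * (a * v) = 1" using v assms(1) by (metis mult.assoc)
  moreover have "(v * a) * b = 1" using v by (simp add: mult.assoc)
  ultimately show "alg_invertible b" by (rule inv_left_right[rotated])
qed

lemma inv_minus:
  fixes a :: "'a::ring_1"
  assumes "alg_invertible a" shows "alg_invertible (- a)"
  using assms unfolding alg_invertible_def by (metis minus_mult_minus)

lemma inv_minus_iff:
  fixes a :: "'a::ring_1"
  shows "alg_invertible (- a) \<longleftrightarrow> alg_invertible a"
  using inv_minus[of a] inv_minus[of "-a"] by auto

lemma inv_power:
  fixes a :: "'a::ring_1"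
  assumes "alg_invertible (a ^ k)" "k > 0" shows "alg_invertible a"
proof -
  obtain j where k: "k = Suc j" using assms(2) by (cases k) auto
  have "a ^ k = a * a ^ j" "a * a ^ j = a ^ j * a" using k by (simp_all add: power_commutes)
  then show ?thesis using inv_comm_factor(1)[of a "a^j"] assms(1) by simp
qed

lemma inv_power2:
  fixes a :: "'a::ring_1"
  assumes "alg_invertible a" shows "alg_invertible (a ^ k)"
  by (induct k) (simp_all add: inv_one inv_mult assms)

lemma inv_commute:
  fixes w v s :: "'a::ring_1"
  assumes "w * v = 1" "v * w = 1" "w * s = s * w"
  shows "v * s = s * v"
proof -
  have "v * s = v * s * (w * v)" using assms by simp
  also have "\<dots> = v * (w * s) * v" using assms(3) by (simp add: mult.assoc)
  also have "\<dots> = s * v" using assms(2) by (simp add: mult.assoc[symmetric])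
  finally show ?thesis .
qed

lemma idem_power: "(p::'a::ring_1) * p = p \<Longrightarrow> k > 0 \<Longrightarrow> p ^ k = p"
proof (induct k)
  case (Suc k) then show ?case by (cases k) (auto simp: power_Suc2)
qed simp

lemma comm_power:
  fixes a b :: "'a::ring_1"
  assumes "a * b = b * a" shows "a ^ k * b = b * a ^ k"
proof (induct k)
  case (Suc k)
  have "a ^ Suc k * b = a * (a ^ k * b)" by (simp add: mult.assoc)
  also have "\<dots> = (a * b) * a ^ k" using Suc by (simp add: mult.assoc)
  also have "\<dots> = b * a ^ Suc k" using assms by (simp add: mult.assoc)
  finally show ?case .
qed simp

lemma power_mult_comm:
  fixes a b :: "'a::ring_1"
  assumes "a * b = b * a" shows "(a * b) ^ k = a ^ k * b ^ k"
proof (induct k)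
  case (Suc k)
  have "(a * b) ^ Suc k = a * b * (a ^ k * b ^ k)" using Suc by simp
  also have "\<dots> = a * (b * a ^ k) * b ^ k" by (simp add: mult.assoc)
  also have "b * a ^ k = a ^ k * b" using comm_power[of a b k] assms by simp
  finally show ?case by (simp add: mult.assoc power_commutes)
qed simp

lemma orth_power_sum:
  fixes u b :: "'a::ring_1"
  assumes "u * b = 0" "b * u = 0" "k > 0"
  shows "(u + b) ^ k = u ^ k + b ^ k"
  using assms(3)
proof (induct k)
  case (Suc k)
  show ?case
  proof (cases k)
    case 0 then show ?thesis by simp
  next
    case (Suc j)
    have "(u + b) ^ Suc k = (u + b) * (u ^ k + b ^ k)" using Suc.hyps Suc by simp
    also have "\<dots> = u ^ Suc k + b ^ Suc k + u * b ^ k + b * u ^ k" by (simp add: algebra_simps)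
    also have "u * b ^ k = 0" using Suc by (simp add: mult.assoc[symmetric] assms)
    also have "b * u ^ k = 0" using Suc by (simp add: mult.assoc[symmetric] assms)
    finally show ?thesis by simp
  qed
qed simp


definition ofc :: "complex \<Rightarrow> 'a::complex_banach_algebra_1" where
  "ofc c = scaleC c 1"


lemma scaleC_zero_left: "scaleC 0 (x::'a::complex_banach_algebra_1) = 0"
  using scaleC_add_left[of 0 0 x] by simp

lemma scaleC_zero_right: "scaleC c (0::'a::complex_banach_algebra_1) = 0"
  using scaleC_add_right[of c 0 "0::'a"] by simp

lemma scaleC_minus_right: "scaleC c (- x::'a::complex_banach_algebra_1) = - scaleC c x"
  using scaleC_add_right[of c x "-x"] scaleC_zero_right[of c] by (metis add.right_inverse minus_unique)

lemma scaleC_diff_right: "scaleC c (x - y::'a::complex_banach_algebra_1) = scaleC c x - scaleC c y"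
  using scaleC_add_right[of c x "-y"] scaleC_minus_right[of c y] by simp

lemma ofc_mult_left: "ofc c * (x::'a::complex_banach_algebra_1) = scaleC c x"
  unfolding ofc_def by (simp add: mult_scaleC_left)

lemma ofc_mult_right: "(x::'a::complex_banach_algebra_1) * ofc c = scaleC c x"
  unfolding ofc_def by (simp add: mult_scaleC_right)

lemma ofc_central: "ofc c * (x::'a::complex_banach_algebra_1) = x * ofc c"
  by (simp add: ofc_mult_left ofc_mult_right)

lemma ofc_add: "(ofc (b + c) :: 'a::complex_banach_algebra_1) = ofc b + ofc c"
  unfolding ofc_def by (simp add: scaleC_add_left)

lemma ofc_mult: "(ofc (b * c) :: 'a::complex_banach_algebra_1) = ofc b * ofc c"
  unfolding ofc_def by (simp add: mult_scaleC_left scaleC_scaleC)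

lemma ofc_one [simp]: "(ofc 1 :: 'a::complex_banach_algebra_1) = 1"
  unfolding ofc_def by (simp add: scaleC_one)

lemma ofc_zero [simp]: "(ofc 0 :: 'a::complex_banach_algebra_1) = 0"
  unfolding ofc_def by (simp add: scaleC_zero_left)

lemma ofc_minus: "(ofc (- c) :: 'a::complex_banach_algebra_1) = - ofc c"
  using ofc_add[of c "-c", where 'a='a] by (metis add.right_inverse ofc_zero minus_unique)

lemma ofc_diff: "(ofc (b - c) :: 'a::complex_banach_algebra_1) = ofc b - ofc c"
  using ofc_add[of b "-c", where 'a='a] ofc_minus[of c, where 'a='a] by simp

lemma ofc_sum: "(ofc (\<Sum>i\<in>A. f i) :: 'a::complex_banach_algebra_1) = (\<Sum>i\<in>A. ofc (f i))"
  by (induct A rule: infinite_finite_induct) (simp_all add: ofc_add)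

lemma ofc_power: "(ofc (c ^ n) :: 'a::complex_banach_algebra_1) = ofc c ^ n"
  by (induct n) (simp_all add: ofc_mult)

lemma ofc_of_nat: "(ofc (of_nat n) :: 'a::complex_banach_algebra_1) = of_nat n"
  by (induct n) (simp_all add: ofc_add)

lemma norm_ofc_mult: "norm (ofc c * (x::'a::complex_banach_algebra_1)) = cmod c * norm x"
  by (simp add: ofc_mult_left norm_scaleC)

lemma norm_ofc: "norm (ofc c :: 'a::complex_banach_algebra_1) = cmod c"
  using norm_ofc_mult[of c "1::'a"] by simp

lemma ofc_real: "(ofc (complex_of_real r) :: 'a::complex_banach_algebra_1) = of_real r"
proof -
  have "(of_real r :: 'a) = scaleR r 1" by (simp add: of_real_def)
  then show ?thesis unfolding ofc_def by (simp add: scaleR_scaleC)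
qed

lemma inv_ofc: "c \<noteq> 0 \<Longrightarrow> alg_invertible (ofc c :: 'a::complex_banach_algebra_1)"
  unfolding alg_invertible_def
  by (rule exI[of _ "ofc (1/c)"]) (simp add: ofc_mult[symmetric])

lemma ofc_power_mult:
  fixes w :: "'a::complex_banach_algebra_1"
  shows "(ofc c * w) ^ n = ofc (c ^ n) * w ^ n"
  by (simp add: power_mult_comm[OF ofc_central] ofc_power)

lemma quasinilpotent_iff:
  fixes a :: "'a::complex_banach_algebra_1"
  shows "quasinilpotent a \<longleftrightarrow> (\<forall>z. z \<noteq> 0 \<longrightarrow> alg_invertible (ofc z - a)) \<and> \<not> alg_invertible a"
proof -
  have mem: "z \<in> spectrum a \<longleftrightarrow> \<not> alg_invertible (ofc z - a)" for z
    unfolding spectrum_def ofc_def by simp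
  have "spectrum a = {0} \<longleftrightarrow> (\<forall>z. z \<in> spectrum a \<longleftrightarrow> z = 0)" by blast
  also have "\<dots> \<longleftrightarrow> (\<forall>z. z \<noteq> 0 \<longrightarrow> alg_invertible (ofc z - a)) \<and> \<not> alg_invertible (ofc 0 - a)"
    unfolding mem by blast
  also have "\<not> alg_invertible (ofc 0 - a) \<longleftrightarrow> \<not> alg_invertible a"
    using inv_minus_iff[of a] by simp
  finally show ?thesis unfolding quasinilpotent_def .
qed

section \<open>Orthogonal decompositions\<close>

lemma decomp_qnil:
  fixes u v e :: "'a::complex_banach_algebra_1"
  assumes e: "e * e = e" and u: "u * e = 0" "e * u = 0" and v: "v * e = v" "e * v = v"
  shows "quasinilpotent (u + v) \<longleftrightarrow>
    (\<forall>z. z \<noteq> 0 \<longrightarrow> alg_invertible (ofc z - u) \<and> alg_invertible (ofc z - v)) \<and>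
    \<not> (alg_invertible (u + e) \<and> alg_invertible (v + (1 - e)))"
proof -
  have uv: "u * v = 0" by (metis u(1) v(2) mult.assoc mult_zero_left)
  have vu: "v * u = 0" by (metis u(2) v(1) mult.assoc mult_zero_right)
  have A: "alg_invertible (ofc z - (u + v)) \<longleftrightarrow> alg_invertible (ofc z - u) \<and> alg_invertible (ofc z - v)"
    if z: "z \<noteq> 0" for z
  proof -
    have eq: "(ofc z - u) * (ofc z - v) = ofc z * (ofc z - (u + v))"
      using uv by (simp add: algebra_simps ofc_mult_left ofc_mult_right scaleC_diff_right scaleC_add_right)
    have cm: "(ofc z - u) * (ofc z - v) = (ofc z - v) * (ofc z - u)"
      using uv vu by (simp add: algebra_simps ofc_mult_left ofc_mult_right scaleC_diff_right scaleC_add_right)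
    have cm2: "ofc z * (ofc z - (u + v)) = (ofc z - (u + v)) * ofc z"
      by (simp add: ofc_central)
    show ?thesis
    proof
      assume "alg_invertible (ofc z - (u + v))"
      then have "alg_invertible ((ofc z - u) * (ofc z - v))"
        unfolding eq by (intro inv_mult inv_ofc z)
      then show "alg_invertible (ofc z - u) \<and> alg_invertible (ofc z - v)"
        using inv_comm_factor[OF cm] by blast
    next
      assume "alg_invertible (ofc z - u) \<and> alg_invertible (ofc z - v)"
      then have "alg_invertible (ofc z * (ofc z - (u + v)))"
        unfolding eq[symmetric] by (blast intro: inv_mult)
      then show "alg_invertible (ofc z - (u + v))"
        using inv_comm_factor(2)[OF cm2] by blast
    qed
  qed
  have B: "alg_invertible (u + v) \<longleftrightarrow> alg_invertible (u + e) \<and> alg_invertible (v + (1 - e))"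
  proof -
    have eq: "(u + e) * (v + (1 - e)) = u + v"
      using uv u v e by (simp add: algebra_simps)
    have cm: "(u + e) * (v + (1 - e)) = (v + (1 - e)) * (u + e)"
      using uv vu u v e by (simp add: algebra_simps)
    show ?thesis using inv_comm_factor[OF cm] inv_mult[of "u + e" "v + (1 - e)"] eq by auto
  qed
  show ?thesis unfolding quasinilpotent_iff using A B by blast
qed


section \<open>Polynomial evaluation\<close>

definition peval :: "complex poly \<Rightarrow> 'a \<Rightarrow> 'a::complex_banach_algebra_1" where
  "peval p b = (\<Sum>i\<le>degree p. ofc (coeff p i) * b ^ i)"

lemma peval_bound:
  assumes "degree p \<le> n"
  shows "peval p b = (\<Sum>i\<le>n. ofc (coeff p i) * b ^ i)"
  unfolding peval_def
  by (rule sum.mono_neutral_left) (use assms in \<open>auto simp: coeff_eq_0\<close>)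

lemma peval_0 [simp]: "peval 0 b = 0"
  by (simp add: peval_def)

lemma peval_add: "peval (p + q) b = peval p b + peval q b"
proof -
  let ?n = "max (degree p) (degree q)"
  have "degree (p + q) \<le> ?n" by (rule degree_add_le) auto
  then have "peval (p + q) b = (\<Sum>i\<le>?n. ofc (coeff (p + q) i) * b ^ i)" by (rule peval_bound)
  also have "\<dots> = (\<Sum>i\<le>?n. ofc (coeff p i) * b ^ i) + (\<Sum>i\<le>?n. ofc (coeff q i) * b ^ i)"
    by (simp add: ofc_add distrib_right sum.distrib)
  also have "\<dots> = peval p b + peval q b"
    by (simp add: peval_bound[symmetric])
  finally show ?thesis .
qed

lemma peval_minus: "peval (- p) b = - peval p b"
  by (simp add: peval_def ofc_minus sum_negf)

lemma peval_diff: "peval (p - q) b = peval p b - peval q b"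
  using peval_add[of p "-q" b] peval_minus[of q b] by simp

lemma peval_smult: "peval (smult c p) b = ofc c * peval p b"
proof -
  have "peval (smult c p) b = (\<Sum>i\<le>degree p. ofc (coeff (smult c p) i) * b ^ i)"
    by (rule peval_bound) (rule degree_smult_le)
  also have "\<dots> = ofc c * peval p b"
    by (simp add: peval_def sum_distrib_left ofc_mult mult.assoc)
  finally show ?thesis .
qed

lemma peval_pCons: "peval (pCons c p) b = ofc c + b * peval p b"
proof -
  have "peval (pCons c p) b = (\<Sum>i\<le>Suc (degree p). ofc (coeff (pCons c p) i) * b ^ i)"
    by (rule peval_bound) simp
  also have "\<dots> = ofc c + (\<Sum>i\<le>degree p. ofc (coeff p i) * b ^ Suc i)"
    by (simp only: sum.atMost_Suc_shift coeff_pCons_0 coeff_pCons_Suc power_0 mult_1_right)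
  also have "(\<Sum>i\<le>degree p. ofc (coeff p i) * b ^ Suc i) = b * peval p b"
    unfolding peval_def sum_distrib_left
    by (rule sum.cong) (simp_all add: ofc_mult_left ofc_mult_right mult_scaleC_right mult_scaleC_left mult.assoc[symmetric] power_commutes)
  finally show ?thesis .
qed

lemma peval_mult: "peval (p * q) b = peval p b * peval q b"
proof (induct p)
  case 0 then show ?case by simp
next
  case (pCons a p)
  have "peval (pCons a p * q) b = ofc a * peval q b + b * (peval p b * peval q b)"
    by (simp add: peval_add peval_smult peval_pCons pCons)
  also have "\<dots> = peval (pCons a p) b * peval q b"
    by (simp add: peval_pCons distrib_right mult.assoc)
  finally show ?case .
qed

lemma peval_comm: "peval p b * peval q b = peval q b * peval p b"
  by (metis peval_mult mult.commute)

lemma peval_const: "peval [:c:] b = ofc c"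
  by (simp add: peval_pCons)

lemma peval_monom: "peval (monom 1 n) b = b ^ n"
proof -
  have "peval (monom 1 n) b = (\<Sum>i\<le>n. ofc (coeff (monom 1 n) i) * b ^ i)"
    by (rule peval_bound) (simp add: degree_monom_le)
  also have "\<dots> = (\<Sum>i\<le>n. if i = n then b ^ i else 0)"
    by (rule sum.cong) auto
  finally show ?thesis by simp
qed

lemma peval_linear: "peval [:- t, 1:] b = b - ofc t"
  by (simp add: peval_pCons ofc_minus)

lemma poly_root_inv:
  fixes b :: "'a::complex_banach_algebra_1"
  assumes "poly f t = 0" "alg_invertible (peval f b)"
  shows "alg_invertible (ofc t - b)"
proof -
  obtain g where g: "f = [:- t, 1:] * g" using assms(1) poly_eq_0_iff_dvd by blast
  have "alg_invertible (peval [:- t, 1:] b * peval g b)" using assms(2) unfolding g peval_mult .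
  then have "alg_invertible (b - ofc t)" using inv_comm_factor(1)[OF peval_comm] peval_linear by metis
  then show ?thesis using inv_minus by fastforce
qed

lemma poly_all_roots_inv:
  fixes b :: "'a::complex_banach_algebra_1"
  assumes "f \<noteq> 0" "\<And>t. poly f t = 0 \<Longrightarrow> alg_invertible (ofc t - b)"
  shows "alg_invertible (peval f b)"
  using assms
proof (induct "degree f" arbitrary: f rule: less_induct)
  case less
  show ?case
  proof (cases "degree f = 0")
    case True
    then obtain c where c: "f = [:c:]" using degree_eq_zeroE by blast
    then have "c \<noteq> 0" using less.prems by simp
    then show ?thesis using c by (simp add: peval_const inv_ofc)
  next
    case False
    then have "\<not> constant (poly f)" by (simp add: constant_degree)
    then obtain t where t: "poly f t = 0" using fundamental_theorem_of_algebra by blast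
    obtain g where g: "f = [:- t, 1:] * g" using t poly_eq_0_iff_dvd by blast
    have g0: "g \<noteq> 0" using g less.prems(1) by auto
    have "degree f = degree [:- t, 1:] + degree g" unfolding g by (rule degree_mult_eq) (use g0 in auto)
    then have "degree f = 1 + degree g" by simp
    then have "degree g < degree f" by simp
    moreover have "\<And>s. poly g s = 0 \<Longrightarrow> alg_invertible (ofc s - b)"
      using less.prems(2) g by simp
    ultimately have ig: "alg_invertible (peval g b)" using less.hyps g0 by blast
    have "alg_invertible (b - ofc t)" using less.prems(2)[OF t] inv_minus by fastforce
    then show ?thesis using ig unfolding g peval_mult peval_linear by (rule inv_mult)
  qed
qed


section \<open>Resolvent of a quasinilpotent element\<close>

definition ainv :: "'a::ring_1 \<Rightarrow> 'a" where
  "ainv w = (SOME v. w * v = 1 \<and> v * w = 1)"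

lemma ainv:
  assumes "alg_invertible w" shows "w * ainv w = 1" "ainv w * w = 1"
proof -
  have "\<exists>v. w * v = 1 \<and> v * w = 1" using assms unfolding alg_invertible_def .
  from someI_ex[OF this] show "w * ainv w = 1" "ainv w * w = 1" unfolding ainv_def by auto
qed

lemma res_inv:
  fixes u :: "'a::complex_banach_algebra_1"
  assumes "quasinilpotent u"
  shows "alg_invertible (1 - ofc l * u)"
proof (cases "l = 0")
  case True then show ?thesis by (simp add: inv_one)
next
  case False
  have "1 - ofc l * u = ofc l * (ofc (1 / l) - u)"
    using False by (simp add: right_diff_distrib ofc_mult[symmetric])
  moreover have "alg_invertible (ofc (1 / l) - u)"
    using assms False unfolding quasinilpotent_iff by simp
  ultimately show ?thesis using False by (simp add: inv_mult inv_ofc)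
qed

definition res :: "'a::complex_banach_algebra_1 \<Rightarrow> complex \<Rightarrow> 'a" where
  "res u l = ainv (1 - ofc l * u)"

lemma res1: "quasinilpotent u \<Longrightarrow> res u l * (1 - ofc l * u) = 1"
  unfolding res_def by (rule ainv(2)[OF res_inv])

lemma res2: "quasinilpotent u \<Longrightarrow> (1 - ofc l * u) * res u l = 1"
  unfolding res_def by (rule ainv(1)[OF res_inv])

lemma resolvent_identity:
  fixes u :: "'a::complex_banach_algebra_1"
  assumes "quasinilpotent u"
  shows "res u l - res u m = ofc (l - m) * (res u l * u * res u m)"
proof -
  have "res u l - res u m = res u l * (1 - ofc m * u) * res u m - res u l * (1 - ofc l * u) * res u m"
    using res1[OF assms] res2[OF assms] by (simp add: mult.assoc)
  also have "\<dots> = res u l * ((1 - ofc m * u) - (1 - ofc l * u)) * res u m"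
    by (simp add: algebra_simps)
  also have "(1 - ofc m * u) - (1 - ofc l * u) = ofc (l - m) * u"
    by (simp add: ofc_diff algebra_simps)
  also have "res u l * (ofc (l - m) * u) * res u m = ofc (l - m) * (res u l * u * res u m)"
    by (simp add: ofc_mult_left mult_scaleC_left mult_scaleC_right)
  finally show ?thesis .
qed

lemma res_diff_bound:
  fixes u :: "'a::complex_banach_algebra_1"
  assumes "quasinilpotent u"
  shows "norm (res u l - res u m) \<le> cmod (l - m) * (norm (res u l) * norm u * norm (res u m))"
proof -
  have "norm (res u l - res u m) = cmod (l - m) * norm (res u l * u * res u m)"
    by (simp add: resolvent_identity[OF assms] norm_ofc_mult)
  also have "\<dots> \<le> cmod (l - m) * (norm (res u l) * norm u * norm (res u m))"
  proof (intro mult_left_mono)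
    have "norm (res u l * u * res u m) \<le> norm (res u l * u) * norm (res u m)" by (rule norm_mult_ineq)
    also have "\<dots> \<le> norm (res u l) * norm u * norm (res u m)"
      by (intro mult_right_mono norm_mult_ineq) simp
    finally show "norm (res u l * u * res u m) \<le> norm (res u l) * norm u * norm (res u m)" .
  qed simp
  finally show ?thesis .
qed

lemma res_local_bound:
  fixes u :: "'a::complex_banach_algebra_1"
  assumes "quasinilpotent u" "cmod (l - m) * (norm u * norm (res u m)) \<le> 1/2"
  shows "norm (res u l) \<le> 2 * norm (res u m)"
proof -
  have "norm (res u l) \<le> norm (res u m) + norm (res u l - res u m)"
    by (metis add.commute diff_add_cancel norm_triangle_ineq)
  also have "norm (res u l - res u m) \<le> norm (res u l) * (cmod (l - m) * (norm u * norm (res u m)))"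
    using res_diff_bound[OF assms(1), of l m] by (simp add: mult_ac)
  also have "\<dots> \<le> norm (res u l) * (1/2)"
    by (rule mult_left_mono[OF assms(2)]) simp
  finally show ?thesis by simp
qed

lemma res_isCont:
  fixes u :: "'a::complex_banach_algebra_1"
  assumes "quasinilpotent u"
  shows "isCont (res u) m"
proof -
  define M where "M = (norm u + 1) * (norm (res u m) + 1)"
  have "1 * 1 \<le> (norm u + 1) * (norm (res u m) + 1)"
    by (rule mult_mono) simp_all
  then have M1: "M \<ge> 1" unfolding M_def by simp
  have Mu: "norm u * norm (res u m) \<le> M" unfolding M_def by (rule mult_mono) simp_all
  have Mr: "norm (res u m) \<le> M" unfolding M_def
    using mult_mono[of 1 "norm u + 1" "norm (res u m)" "norm (res u m) + 1"] by simp
  show ?thesis unfolding isCont_def LIM_eq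
  proof (intro allI impI)
    fix r :: real assume r: "r > 0"
    define s where "s = min (1 / (2 * M)) (r / (2 * M * M))"
    have s: "s > 0" using r M1 unfolding s_def by auto
    show "\<exists>s>0. \<forall>x. x \<noteq> m \<and> norm (x - m) < s \<longrightarrow> norm (res u x - res u m) < r"
    proof (intro exI[of _ s] conjI allI impI s)
      fix x assume x: "x \<noteq> m \<and> norm (x - m) < s"
      have M0: "M > 0" "2 * M * M > 0" using M1 by auto
      have x1: "cmod (x - m) < 1 / (2 * M)" "cmod (x - m) < r / (2 * M * M)"
        using x unfolding s_def by auto
      have "cmod (x - m) * M \<le> (1 / (2 * M)) * M"
        using x1(1) M0 by (intro mult_right_mono) auto
      then have d1: "cmod (x - m) * M \<le> 1/2" using M0 by simp
      have d2: "cmod (x - m) * (2 * M * M) < r"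
        using x1(2) M0(2) by (simp add: pos_less_divide_eq)
      have "cmod (x - m) * (norm u * norm (res u m)) \<le> cmod (x - m) * M"
        by (rule mult_left_mono[OF Mu]) simp
      then have lb: "norm (res u x) \<le> 2 * norm (res u m)"
        using d1 by (intro res_local_bound[OF assms]) simp
      have "norm (res u x - res u m) \<le> cmod (x - m) * (norm (res u x) * norm u * norm (res u m))"
        by (rule res_diff_bound[OF assms])
      also have "\<dots> \<le> cmod (x - m) * (2 * norm (res u m) * (norm u * norm (res u m)))"
      proof (rule mult_left_mono)
        have "norm (res u x) * norm u * norm (res u m) = norm (res u x) * (norm u * norm (res u m))"
          by (simp add: mult.assoc)
        also have "\<dots> \<le> 2 * norm (res u m) * (norm u * norm (res u m))"
          by (rule mult_right_mono[OF lb]) simp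
        finally show "norm (res u x) * norm u * norm (res u m) \<le> 2 * norm (res u m) * (norm u * norm (res u m))" .
      qed simp
      also have "\<dots> \<le> cmod (x - m) * (2 * M * M)"
      proof (rule mult_left_mono)
        have "2 * norm (res u m) * (norm u * norm (res u m)) = 2 * (norm (res u m) * (norm u * norm (res u m)))"
          by simp
        also have "\<dots> \<le> 2 * (M * M)"
          using Mr Mu M1 by (intro mult_left_mono mult_mono) auto
        finally show "2 * norm (res u m) * (norm u * norm (res u m)) \<le> 2 * M * M" by simp
      qed simp
      finally show "norm (res u x - res u m) < r" using d2 by simp
    qed
  qed
qed


section \<open>Roots of unity averaging\<close>

definition rou :: "nat \<Rightarrow> complex" where
  "rou N = exp (2 * of_real pi * \<i> / of_nat N)"

lemma rou_power: "rou N ^ k = exp (of_nat k * (2 * of_real pi * \<i> / of_nat N))"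
  unfolding rou_def by (rule exp_of_nat_mult[symmetric])

lemma norm_rou_power: "cmod (rou N ^ k) = 1"
  unfolding rou_power norm_exp_eq_Re by simp

lemma rou_N: "N > 0 \<Longrightarrow> rou N ^ N = 1"
  unfolding rou_power by simp

lemma rou_neq1:
  assumes "0 < i" "i < N" shows "rou N ^ i \<noteq> 1"
proof
  assume "rou N ^ i = 1"
  then obtain n :: int where n: "Im (of_nat i * (2 * of_real pi * \<i> / of_nat N)) = of_int (2 * n) * pi"
    unfolding rou_power exp_eq_1 by blast
  have "Im (of_nat i * (2 * of_real pi * \<i> / of_nat N)) = 2 * pi * i / N" by simp
  with n have "pi * (2 * (real i / N)) = pi * (2 * n)" by (simp add: mult_ac)
  then have "2 * (real i / N) = real_of_int (2 * n)" using pi_neq_zero by (metis mult_cancel_left)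
  then have "real i / N = n" by simp
  then have "real i = n * N" using assms by (simp add: field_simps)
  then have ii: "int i = n * int N" by (metis of_int_eq_iff of_int_mult of_int_of_nat_eq)
  show False
  proof (cases "n \<le> 0")
    case True then have "n * int N \<le> 0" by (simp add: mult_nonpos_nonneg)
    then show False using ii assms by simp
  next
    case False then have "1 * int N \<le> n * int N" by (intro mult_right_mono) simp_all
    then have "n * int N \<ge> int N" by simp
    moreover have "int i < int N" using assms by simp
    ultimately show False using ii by linarith
  qed
qed

lemma rou_sum:
  assumes "N > 0" "i < N"
  shows "(\<Sum>k<N. (rou N ^ k) ^ i) = (if i = 0 then of_nat N else 0)"
proof (cases "i = 0")
  case True then show ?thesis by simp
next
  case False
  have "(\<Sum>k<N. (rou N ^ k) ^ i) = (\<Sum>k<N. (rou N ^ i) ^ k)"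
    by (simp add: power_mult[symmetric] mult.commute)
  also have "\<dots> = 0"
  proof -
    have neq: "rou N ^ i \<noteq> 1" using rou_neq1[of i N] False assms by simp
    have "(rou N ^ i) ^ N = (rou N ^ N) ^ i" by (simp add: power_mult[symmetric] mult.commute)
    then have "(rou N ^ i) ^ N = 1" using rou_N[OF assms(1)] by simp
    then show ?thesis using neq by (simp add: sum_gp_strict)
  qed
  finally show ?thesis using False by simp
qed

lemma geom_ring:
  fixes W :: "'a::ring_1"
  shows "(1 - W) * (\<Sum>i<N. W ^ i) = 1 - W ^ N"
proof (induct N)
  case (Suc N)
  have "(1 - W) * (\<Sum>i<Suc N. W ^ i) = (1 - W) * (\<Sum>i<N. W ^ i) + (1 - W) * W ^ N"
    by (simp add: distrib_left)
  also have "\<dots> = 1 - W ^ N + (W ^ N - W ^ Suc N)" using Suc by (simp add: left_diff_distrib)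
  finally show ?case by simp
qed simp

definition avg :: "'a::complex_banach_algebra_1 \<Rightarrow> nat \<Rightarrow> complex \<Rightarrow> 'a" where
  "avg u N l = ofc (1 / of_nat N) * (\<Sum>k<N. res u (rou N ^ k * l))"

lemma avg_identity:
  fixes u :: "'a::complex_banach_algebra_1"
  assumes q: "quasinilpotent u" and N: "N > 0"
  shows "avg u N l * (1 - (ofc l * u) ^ N) = 1"
proof -
  define w where "w = ofc l * u"
  have each: "res u (rou N ^ k * l) * (1 - w ^ N) = (\<Sum>i<N. ofc ((rou N ^ k) ^ i) * w ^ i)" for k
  proof -
    define W where "W = ofc (rou N ^ k) * w"
    have W1: "ofc (rou N ^ k * l) * u = W" unfolding W_def w_def by (simp add: ofc_mult mult.assoc)
    have WN: "W ^ N = w ^ N"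
      unfolding W_def ofc_power_mult
      by (simp add: power_mult[symmetric] mult.commute[of k] power_mult rou_N N)
    have "res u (rou N ^ k * l) * (1 - w ^ N) = res u (rou N ^ k * l) * ((1 - W) * (\<Sum>i<N. W ^ i))"
      by (simp add: geom_ring WN)
    also have "\<dots> = (\<Sum>i<N. W ^ i)"
      using res1[OF q, of "rou N ^ k * l"] by (simp add: W1 mult.assoc[symmetric])
    also have "\<dots> = (\<Sum>i<N. ofc ((rou N ^ k) ^ i) * w ^ i)"
      unfolding W_def ofc_power_mult ..
    finally show ?thesis .
  qed
  have "(\<Sum>k<N. res u (rou N ^ k * l)) * (1 - w ^ N) = (\<Sum>k<N. \<Sum>i<N. ofc ((rou N ^ k) ^ i) * w ^ i)"
    by (simp add: sum_distrib_right each)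
  also have "\<dots> = (\<Sum>i<N. \<Sum>k<N. ofc ((rou N ^ k) ^ i) * w ^ i)"
    by (rule sum.swap)
  also have "\<dots> = (\<Sum>i<N. ofc (\<Sum>k<N. (rou N ^ k) ^ i) * w ^ i)"
    by (simp add: ofc_sum sum_distrib_right)
  also have "\<dots> = (\<Sum>i<N. if i = 0 then of_nat N else 0)"
    by (rule sum.cong) (simp_all add: rou_sum N ofc_of_nat)
  also have "\<dots> = of_nat N" using N by simp
  finally have S: "(\<Sum>k<N. res u (rou N ^ k * l)) * (1 - w ^ N) = of_nat N" .
  have "avg u N l * (1 - w ^ N) = ofc (1 / of_nat N) * of_nat N"
    unfolding avg_def by (simp add: mult.assoc S)
  also have "\<dots> = 1" using N by (simp add: ofc_of_nat[symmetric] ofc_mult[symmetric])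
  finally show ?thesis unfolding w_def .
qed

lemma avg_diff_bound:
  fixes u :: "'a::complex_banach_algebra_1"
  assumes N: "N > 0" and e: "\<And>k. norm (res u (rou N ^ k * l) - res u (rou N ^ k * m)) \<le> e"
  shows "norm (avg u N l - avg u N m) \<le> e"
proof -
  have "avg u N l - avg u N m = ofc (1 / of_nat N) * (\<Sum>k<N. res u (rou N ^ k * l) - res u (rou N ^ k * m))"
    unfolding avg_def by (simp add: sum_subtractf right_diff_distrib)
  then have "norm (avg u N l - avg u N m) = (1 / N) * norm (\<Sum>k<N. res u (rou N ^ k * l) - res u (rou N ^ k * m))"
    by (simp add: norm_ofc_mult norm_divide)
  also have "\<dots> \<le> (1 / N) * (\<Sum>k<N. e)"
    by (intro mult_left_mono order.trans[OF norm_sum] sum_mono e) simp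
  also have "\<dots> = e" using N by simp
  finally show ?thesis .
qed


section \<open>Powers of a quasinilpotent element decay\<close>

lemma norm_ofreal_power:
  fixes u :: "'a::complex_banach_algebra_1"
  assumes "r \<ge> 0"
  shows "norm ((ofc (complex_of_real r) * u) ^ N) = r ^ N * norm (u ^ N)"
  using assms by (simp add: ofc_power_mult norm_ofc_mult norm_power)

lemma qnil_step:
  fixes u :: "'a::complex_banach_algebra_1"
  assumes q: "quasinilpotent u"
    and d: "d > 0" and T: "r + d / 2 \<le> T" and r: "r \<ge> 0"
    and uc: "\<And>x x'. cmod x \<le> T \<Longrightarrow> cmod x' \<le> T \<Longrightarrow> cmod (x' - x) < d \<Longrightarrow> norm (res u x' - res u x) < 1/8"
    and Q: "eventually (\<lambda>N. r ^ N * norm (u ^ N) \<le> 1/8) sequentially"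
  shows "eventually (\<lambda>N. (r + d / 4) ^ N * norm (u ^ N) \<le> 1/8) sequentially"
proof -
  define s where "s = r + d / 2"
  have s: "s > 0" "s \<le> T" using d r T unfolding s_def by auto
  have half: "eventually (\<lambda>N. s ^ N * norm (u ^ N) \<le> 1/2) sequentially"
    using Q eventually_gt_at_top[of 0]
  proof eventually_elim
    case (elim N)
    define Er where "Er = avg u N (complex_of_real r)"
    define Es where "Es = avg u N (complex_of_real s)"
    define w where "w = (ofc (complex_of_real r) * u) ^ N"
    define w' where "w' = (ofc (complex_of_real s) * u) ^ N"
    have nw: "norm w \<le> 1/8" using elim r unfolding w_def by (simp add: norm_ofreal_power)
    have "Er * (1 - w) = 1" unfolding Er_def w_def by (rule avg_identity[OF q elim(2)])
    then have "Er - 1 = Er * w" by (simp add: algebra_simps)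
    then have "norm (Er - 1) \<le> norm Er * norm w" by (simp add: norm_mult_ineq)
    also have "\<dots> \<le> (1 + norm (Er - 1)) * (1/8)"
    proof (rule mult_mono[OF _ nw])
      show "norm Er \<le> 1 + norm (Er - 1)"
        by (metis add.commute diff_add_cancel norm_one norm_triangle_ineq)
    qed auto
    finally have e1: "norm (Er - 1) \<le> 1/7" by simp
    have e2: "norm (Es - Er) \<le> 1/8"
      unfolding Es_def Er_def
    proof (rule avg_diff_bound[OF elim(2)])
      fix k
      have "norm (res u (rou N ^ k * complex_of_real s) - res u (rou N ^ k * complex_of_real r)) < 1/8"
      proof (rule uc)
        show "cmod (rou N ^ k * complex_of_real r) \<le> T"
          using r T d by (simp add: norm_mult norm_rou_power)
        show "cmod (rou N ^ k * complex_of_real s) \<le> T"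
          using s by (simp add: norm_mult norm_rou_power)
        have "rou N ^ k * complex_of_real s - rou N ^ k * complex_of_real r = rou N ^ k * complex_of_real (d/2)"
          unfolding s_def by (simp add: algebra_simps)
        then show "cmod (rou N ^ k * complex_of_real s - rou N ^ k * complex_of_real r) < d"
          using d by (simp only: norm_mult norm_rou_power) simp
      qed
      then show "norm (res u (rou N ^ k * complex_of_real s) - res u (rou N ^ k * complex_of_real r)) \<le> 1/8"
        by simp
    qed
    define dd where "dd = 1 - Es"
    have ndd: "norm dd \<le> 15/56"
    proof -
      have "dd = - (Er - 1) - (Es - Er)" unfolding dd_def by simp
      then have "norm dd \<le> norm (Er - 1) + norm (Es - Er)"
        by (metis norm_minus_cancel norm_triangle_ineq4)
      then show ?thesis using e1 e2 by simp
    qed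
    have "Es * (1 - w') = 1" unfolding Es_def w'_def by (rule avg_identity[OF q elim(2)])
    then have "w' = dd * w' - dd" unfolding dd_def by (simp add: algebra_simps)
    then have "norm w' \<le> norm dd * norm w' + norm dd"
      by (metis norm_mult_ineq norm_triangle_ineq4 order.trans add_mono order_refl)
    also have "\<dots> \<le> (15/56) * norm w' + 15/56"
      by (intro add_mono mult_right_mono ndd) simp_all
    finally have "norm w' \<le> 15/41" by simp
    then show ?case using s unfolding w'_def by (simp add: norm_ofreal_power)
  qed
  define qq where "qq = (r + d / 4) / s"
  have qq: "0 \<le> qq" "qq < 1" using r d unfolding qq_def s_def by (auto simp: field_simps)
  have "(\<lambda>N. qq ^ N) \<longlonglongrightarrow> 0" by (rule LIMSEQ_power_zero) (use qq in auto)
  then have ev: "eventually (\<lambda>N. qq ^ N < 1/4) sequentially"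
    by (rule order_tendstoD) simp
  show ?thesis using half ev
  proof eventually_elim
    case (elim N)
    have "(r + d / 4) = qq * s" unfolding qq_def using s by simp
    then have "(r + d / 4) ^ N * norm (u ^ N) = qq ^ N * (s ^ N * norm (u ^ N))"
      by (simp add: power_mult_distrib)
    also have "\<dots> \<le> (1/4) * (1/2)"
      using elim qq s(1) by (intro mult_mono) auto
    finally show ?case by simp
  qed
qed


lemma qnil_decay:
  fixes u :: "'a::complex_banach_algebra_1"
  assumes q: "quasinilpotent u" and K: "K > 0"
  shows "\<exists>j>0. norm (u ^ j) * K ^ j < 1"
proof -
  define T where "T = 2 * K + 2"
  have "continuous_on (cball 0 T) (res u)"
    by (intro continuous_at_imp_continuous_on ballI res_isCont[OF q])
  then have "uniformly_continuous_on (cball 0 T) (res u)"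
    by (intro compact_uniformly_continuous) auto
  then obtain d where d: "d > 0"
    and dd: "\<And>x x'. x \<in> cball 0 T \<Longrightarrow> x' \<in> cball 0 T \<Longrightarrow> dist x' x < d \<Longrightarrow> dist (res u x') (res u x) < 1/8"
    unfolding uniformly_continuous_on_def by (meson zero_less_divide_1_iff zero_less_numeral)
  define d' where "d' = min d 1"
  have d': "d' > 0" "d' \<le> 1" "d' \<le> d" using d unfolding d'_def by auto
  have uc: "norm (res u x' - res u x) < 1/8" if "cmod x \<le> T" "cmod x' \<le> T" "cmod (x' - x) < d'" for x x'
    using dd[of x x'] that d' by (simp add: dist_norm)
  let ?Q = "\<lambda>r. eventually (\<lambda>N. r ^ N * norm (u ^ N) \<le> 1/8) sequentially"
  have mono: "?Q r'" if "?Q r" "0 \<le> r'" "r' \<le> r" for r r'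
    using that(1)
  proof eventually_elim
    case (elim N)
    have "r' ^ N * norm (u ^ N) \<le> r ^ N * norm (u ^ N)"
      by (intro mult_right_mono power_mono that) simp_all
    then show ?case using elim by simp
  qed
  have Q0: "?Q 0"
    using eventually_gt_at_top[of "0::nat"] by eventually_elim (simp add: zero_power)
  have ind: "\<forall>r. 0 \<le> r \<and> r \<le> real j * d' / 4 \<and> r \<le> T - 1 \<longrightarrow> ?Q r" for j :: nat
  proof (induct j)
    case 0 then show ?case using Q0 by auto
  next
    case (Suc j)
    show ?case
    proof (intro allI impI)
      fix r assume r: "0 \<le> r \<and> r \<le> real (Suc j) * d' / 4 \<and> r \<le> T - 1"
      define r0 where "r0 = max 0 (r - d' / 4)"
      have jj: "real (Suc j) * d' / 4 = real j * d' / 4 + d' / 4" by (simp add: algebra_simps)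
      have T1: "T \<ge> 1" using K unfolding T_def by simp
      have jd: "real j * d' / 4 \<ge> 0" using d' by simp
      have r0: "0 \<le> r0" "r0 \<le> real j * d' / 4" "r0 \<le> T - 1"
        using r jj T1 jd d' unfolding r0_def max_def by (auto split: if_splits)
      then have Qr0: "?Q r0" using Suc by blast
      have rT: "r0 + d' / 2 \<le> T" using r0 d' by simp
      have "?Q (r0 + d' / 4)"
        by (rule qnil_step[OF q d'(1) rT r0(1) uc Qr0]) simp_all
      then show "?Q r" by (rule mono) (use r r0_def in auto)
    qed
  qed
  obtain j :: nat where j: "2 * K / (d' / 4) < j" using reals_Archimedean2 by blast
  have "2 * K \<le> real j * d' / 4" using j d' by (simp add: field_simps)
  moreover have "0 \<le> 2 * K" "2 * K \<le> T - 1" using K unfolding T_def by auto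
  ultimately have "?Q (2 * K)" using ind[of j] by blast
  then obtain N where N: "N > 0" "(2 * K) ^ N * norm (u ^ N) \<le> 1/8"
    using eventually_gt_at_top[of "0::nat"] by (metis (mono_tags, lifting) eventually_conj eventually_sequentially order_refl)
  have "K ^ N * norm (u ^ N) \<le> (2 * K) ^ N * norm (u ^ N)"
    using K by (intro mult_right_mono power_mono) auto
  then show ?thesis using N by (intro exI[of _ N]) (auto simp: mult.commute)
qed


section \<open>Sylvester-type equations\<close>

lemma small_fix_zero:
  fixes X :: "'a::real_normed_algebra_1"
  assumes "norm X \<le> c * norm X" "c < 1"
  shows "X = 0"
proof -
  have "norm X * (1 - c) \<le> 0" using assms(1) by (simp add: algebra_simps)
  then have "norm X \<le> 0" using assms(2) by (simp add: mult_le_0_iff)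
  then show ?thesis by simp
qed

lemma sylv1:
  fixes u :: "'a::complex_banach_algebra_1"
  assumes q: "quasinilpotent u" and B: "alg_invertible B" and eq: "u * X = X * B"
  shows "X = 0"
proof -
  define Bi where "Bi = ainv B"
  have Bi: "B * Bi = 1" "Bi * B = 1" using ainv[OF B] unfolding Bi_def by auto
  have X1: "X = u * X * Bi" by (metis Bi(1) eq mult.assoc mult_1_right)
  have Xj: "X = u ^ j * X * Bi ^ j" for j
  proof (induct j)
    case (Suc j)
    have "u ^ Suc j * X * Bi ^ Suc j = u ^ j * (u * X * Bi) * Bi ^ j"
      by (simp only: power_Suc2[of u] power_Suc[of Bi] mult.assoc)
    then show ?case using Suc X1 by simp
  qed simp
  define K where "K = norm Bi + 1"
  have K0: "K > 0" unfolding K_def by (simp add: add_nonneg_pos)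
  obtain j where j: "j > 0" "norm (u ^ j) * K ^ j < 1" using qnil_decay[OF q K0] by blast
  have "norm X \<le> norm (u ^ j * X) * norm (Bi ^ j)" by (subst Xj) (rule norm_mult_ineq)
  also have "\<dots> \<le> (norm (u ^ j) * norm X) * K ^ j"
    by (intro mult_mono norm_mult_ineq order.trans[OF norm_power_ineq] power_mono) (auto simp: K_def)
  finally show ?thesis using j(2) by (intro small_fix_zero[of X "norm (u ^ j) * K ^ j"]) (simp_all add: mult_ac)
qed

lemma sylv2:
  fixes u :: "'a::complex_banach_algebra_1"
  assumes q: "quasinilpotent u" and B: "alg_invertible B" and eq: "X * u = B * X"
  shows "X = 0"
proof -
  define Bi where "Bi = ainv B"
  have Bi: "B * Bi = 1" "Bi * B = 1" using ainv[OF B] unfolding Bi_def by auto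
  have X1: "X = Bi * X * u" by (metis Bi(2) eq mult.assoc mult_1_left)
  have Xj: "X = Bi ^ j * X * u ^ j" for j
  proof (induct j)
    case (Suc j)
    have "Bi ^ Suc j * X * u ^ Suc j = Bi ^ j * (Bi * X * u) * u ^ j"
      by (simp only: power_Suc2[of Bi] power_Suc[of u] mult.assoc)
    then show ?case using Suc X1 by simp
  qed simp
  define K where "K = norm Bi + 1"
  have K0: "K > 0" unfolding K_def by (simp add: add_nonneg_pos)
  obtain j where j: "j > 0" "norm (u ^ j) * K ^ j < 1" using qnil_decay[OF q K0] by blast
  have "norm X \<le> norm (Bi ^ j * X) * norm (u ^ j)" by (subst Xj) (rule norm_mult_ineq)
  also have "\<dots> \<le> (K ^ j * norm X) * norm (u ^ j)"
  proof (rule mult_right_mono)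
    have "norm (Bi ^ j * X) \<le> norm (Bi ^ j) * norm X" by (rule norm_mult_ineq)
    also have "\<dots> \<le> K ^ j * norm X"
      by (intro mult_right_mono order.trans[OF norm_power_ineq] power_mono) (auto simp: K_def)
    finally show "norm (Bi ^ j * X) \<le> K ^ j * norm X" .
  qed simp
  finally show ?thesis using j(2) by (intro small_fix_zero[of X "norm (u ^ j) * K ^ j"]) (simp_all add: mult_ac)
qed


lemma geom_ring2:
  fixes W :: "'a::ring_1"
  shows "(\<Sum>i<N. W ^ i) * (1 - W) = 1 - W ^ N"
proof (induct N)
  case (Suc N)
  have "(\<Sum>i<Suc N. W ^ i) * (1 - W) = (\<Sum>i<N. W ^ i) * (1 - W) + W ^ N * (1 - W)"
    by (simp add: distrib_right)
  also have "\<dots> = 1 - W ^ N + (W ^ N - W ^ Suc N)" using Suc by (simp add: right_diff_distrib power_commutes)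
  finally show ?case by simp
qed simp

lemma inv_geom:
  fixes W :: "'a::ring_1"
  assumes "alg_invertible (1 - W ^ k)"
  shows "alg_invertible (1 - W)"
proof -
  obtain v where v: "(1 - W ^ k) * v = 1" "v * (1 - W ^ k) = 1" using assms unfolding alg_invertible_def by blast
  have "(1 - W) * ((\<Sum>i<k. W ^ i) * v) = 1" using v geom_ring[of W k] by (simp add: mult.assoc[symmetric])
  moreover have "(v * (\<Sum>i<k. W ^ i)) * (1 - W) = 1" using v geom_ring2[of W k] by (simp add: mult.assoc)
  ultimately show ?thesis by (intro inv_left_right)
qed

lemma inv_factor_left:
  fixes B w :: "'a::ring_1"
  assumes "alg_invertible B" "alg_invertible (B * w)"
  shows "alg_invertible w"
proof -
  obtain Bi where Bi: "B * Bi = 1" "Bi * B = 1" using assms(1) unfolding alg_invertible_def by blast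
  have "w = Bi * (B * w)" using Bi by (simp add: mult.assoc[symmetric])
  moreover have "alg_invertible Bi" using Bi unfolding alg_invertible_def by blast
  ultimately show ?thesis using inv_mult assms(2) by metis
qed

locale core =
  fixes a p :: "'a::complex_banach_algebra_1"
  assumes pp: "p * p = p" and ap: "a * p = p * a" and Binv: "alg_invertible (a * p + (1 - p))"
begin

definition "b = a * p"
definition "u = a - b"

lemma bp: "b * p = b" "p * b = b" unfolding b_def by (metis ap pp mult.assoc)+

lemma up: "u * p = 0" "p * u = 0" unfolding u_def using bp by (simp_all add: algebra_simps b_def ap)

lemma ub: "u * b = 0" "b * u = 0"
  using up bp by (metis mult.assoc mult_zero_left mult_zero_right)+

lemma bjp: "j > 0 \<Longrightarrow> b ^ j * p = b ^ j" "j > 0 \<Longrightarrow> p * b ^ j = b ^ j"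
proof -
  assume j: "j > 0"
  then obtain i where i: "j = Suc i" by (cases j) auto
  show "b ^ j * p = b ^ j" unfolding i by (simp only: power_Suc2 mult.assoc bp(1))
  show "p * b ^ j = b ^ j" unfolding i by (simp only: power_Suc mult.assoc[symmetric] bp(2))
qed

lemma ujp: "j > 0 \<Longrightarrow> u ^ j * p = 0" "j > 0 \<Longrightarrow> p * u ^ j = 0"
proof -
  assume j: "j > 0"
  then obtain i where i: "j = Suc i" by (cases j) auto
  show "u ^ j * p = 0" unfolding i by (simp only: power_Suc2 mult.assoc up(1) mult_zero_right)
  show "p * u ^ j = 0" unfolding i by (simp only: power_Suc mult.assoc[symmetric] up(2) mult_zero_left)
qed

lemma Bpow: "j > 0 \<Longrightarrow> (b + (1 - p)) ^ j = b ^ j + (1 - p)"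
proof -
  assume j: "j > 0"
  have "(b + (1 - p)) ^ j = b ^ j + (1 - p) ^ j"
    by (rule orth_power_sum[OF _ _ j]) (use bp in \<open>simp_all add: algebra_simps\<close>)
  moreover have "(1 - p) ^ j = 1 - p" by (rule idem_power[OF _ j]) (simp add: algebra_simps pp)
  ultimately show ?thesis by simp
qed

lemma Bpow_inv: "j > 0 \<Longrightarrow> alg_invertible (b ^ j + (1 - p))"
  using Bpow[of j] inv_power2[OF Binv[folded b_def], of j] by simp

lemma fac:
  assumes "i > 0" "j > 0"
  shows "(b ^ i + (1 - p)) * (1 - b ^ j) = (b ^ i - b ^ (i + j)) + (1 - p)"
proof -
  have "(1 - p) * b ^ j = 0" using bjp(2)[OF assms(2)] by (simp add: algebra_simps)
  then show ?thesis by (simp add: algebra_simps power_add)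
qed

lemma upow: "j > 0 \<Longrightarrow> (u + p) ^ j = u ^ j + p"
  using orth_power_sum[OF up, of j] idem_power[OF pp, of j] by simp

lemma decomp:
  assumes "j > 0" "i > 0"
  shows "quasinilpotent (u ^ i + (b ^ j - b ^ (j * (m + 1)))) \<longleftrightarrow>
    (\<forall>z. z \<noteq> 0 \<longrightarrow> alg_invertible (ofc z - u ^ i) \<and> alg_invertible (ofc z - (b ^ j - b ^ (j * (m + 1))))) \<and>
    \<not> (alg_invertible (u ^ i + p) \<and> alg_invertible ((b ^ j - b ^ (j * (m + 1))) + (1 - p)))"
proof (rule decomp_qnil[OF pp ujp[OF assms(2)]])
  show "(b ^ j - b ^ (j * (m + 1))) * p = b ^ j - b ^ (j * (m + 1))"
    using bjp(1)[OF assms(1)] bjp(1)[of "j * (m + 1)"] assms by (simp add: algebra_simps)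
  show "p * (b ^ j - b ^ (j * (m + 1))) = b ^ j - b ^ (j * (m + 1))"
    using bjp(2)[OF assms(1)] bjp(2)[of "j * (m + 1)"] assms by (simp add: algebra_simps)
qed

end


lemma peval3: "peval ([:z:] - monom 1 i + monom 1 j) b = ofc z - (b ^ i - b ^ j)"
  by (simp add: peval_add peval_diff peval_const peval_monom)

lemma poly3: "poly ([:z:] - monom 1 i + monom 1 j) (t::complex) = z - t ^ i + t ^ j"
  by (simp add: poly_monom)

lemma peval2: "peval ([:z:] - monom 1 i) b = ofc z - b ^ i"
  by (simp add: peval_diff peval_const peval_monom)

lemma poly2: "poly ([:z:] - monom 1 i) (t::complex) = z - t ^ i"
  by (simp add: poly_monom)

lemma nz_poly: "poly f 0 \<noteq> 0 \<Longrightarrow> f \<noteq> 0"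
  by auto

context core
begin

lemma fwd:
  assumes m: "m > 0" and k: "k > 0" and q: "quasinilpotent (u + (b - b ^ (m + 1)))"
  shows "quasinilpotent (u ^ k + (b ^ k - b ^ (k * (m + 1))))"
proof -
  from q decomp[of 1 1 m] have H1: "\<And>z. z \<noteq> 0 \<Longrightarrow> alg_invertible (ofc z - u) \<and> alg_invertible (ofc z - (b - b ^ (m + 1)))"
    and H2: "\<not> (alg_invertible (u + p) \<and> alg_invertible ((b - b ^ (m + 1)) + (1 - p)))"
    by auto
  show ?thesis unfolding decomp[OF k k]
  proof (intro conjI allI impI notI)
    fix z :: complex assume z: "z \<noteq> 0"
    show "alg_invertible (ofc z - u ^ k)"
      unfolding peval2[symmetric]
    proof (rule poly_all_roots_inv)
      show "[:z:] - monom 1 k \<noteq> 0" using z k by (intro nz_poly) (simp add: poly_monom zero_power)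
      fix t assume "poly ([:z:] - monom 1 k) t = 0"
      then have "t \<noteq> 0" using z k by (auto simp: poly_monom zero_power)
      then show "alg_invertible (ofc t - u)" using H1 by blast
    qed
    show "alg_invertible (ofc z - (b ^ k - b ^ (k * (m + 1))))"
      unfolding peval3[symmetric]
    proof (rule poly_all_roots_inv)
      show "[:z:] - monom 1 k + monom 1 (k * (m + 1)) \<noteq> 0" using z k by (intro nz_poly) (simp add: poly_monom zero_power)
      fix t assume t: "poly ([:z:] - monom 1 k + monom 1 (k * (m + 1))) t = 0"
      then have t': "z - t ^ k + t ^ (k * (m + 1)) = 0" by (simp add: poly_monom)
      define s where "s = t - t ^ (m + 1)"
      show "alg_invertible (ofc t - b)"
      proof (cases "s = 0")
        case False
        have "alg_invertible (peval ([:s:] - monom 1 1 + monom 1 (m + 1)) b)"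
          unfolding peval3 using H1[OF False] by simp
        moreover have "poly ([:s:] - monom 1 1 + monom 1 (m + 1)) t = 0"
          unfolding poly3 s_def by simp
        ultimately show ?thesis by (intro poly_root_inv)
      next
        case True
        show ?thesis
        proof (cases "t = 0")
          case True then show ?thesis using t' z k by (simp add: zero_power)
        next
          case False
          have "t * t ^ m = t * 1" using \<open>s = 0\<close> unfolding s_def by simp
          then have tm: "t ^ m = 1" using False by (metis mult_left_cancel)
          have "t ^ (k * (m + 1)) = t ^ k * (t ^ m) ^ k"
            by (simp add: power_mult[symmetric] power_add[symmetric] algebra_simps)
          then have "t ^ (k * (m + 1)) = t ^ k" using tm by simp
          then show ?thesis using t' z by simp
        qed
      qed
    qed
  next
    assume A: "alg_invertible (u ^ k + p) \<and> alg_invertible (b ^ k - b ^ (k * (m + 1)) + (1 - p))"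
    have "alg_invertible (u + p)" using A upow[OF k] inv_power[OF _ k] by metis
    moreover have "alg_invertible (b - b ^ (m + 1) + (1 - p))"
    proof -
      have "b ^ k - b ^ (k * (m + 1)) + (1 - p) = (b ^ k + (1 - p)) * (1 - b ^ (k * m))"
        using fac[of k "k * m"] k m by (simp add: algebra_simps)
      then have "alg_invertible (1 - b ^ (k * m))"
        using A Bpow_inv[OF k] inv_factor_left by metis
      then have "alg_invertible (1 - (b ^ m) ^ k)" by (simp add: power_mult[symmetric] mult.commute)
      then have i1: "alg_invertible (1 - b ^ m)" by (rule inv_geom)
      have "b - b ^ (m + 1) + (1 - p) = (b ^ 1 + (1 - p)) * (1 - b ^ m)"
        using fac[of 1 m] m by simp
      then show ?thesis using inv_mult[OF Bpow_inv[of 1] i1] by simp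
    qed
    ultimately show False using H2 by blast
  qed
qed

lemma bwd:
  assumes m: "m > 0" and k: "k > 0" and q: "quasinilpotent (u ^ k + (b ^ k - b ^ (k * (m + 1))))"
  shows "quasinilpotent (u + (b - b ^ (k * m + 1)))"
proof -
  from q decomp[OF k k, of m] have H1: "\<And>z. z \<noteq> 0 \<Longrightarrow> alg_invertible (ofc z - u ^ k) \<and> alg_invertible (ofc z - (b ^ k - b ^ (k * (m + 1))))"
    and H2: "\<not> (alg_invertible (u ^ k + p) \<and> alg_invertible ((b ^ k - b ^ (k * (m + 1))) + (1 - p)))"
    by auto
  have goal: "quasinilpotent (u ^ 1 + (b ^ 1 - b ^ (1 * (k * m + 1))))"
    unfolding decomp[OF zero_less_one zero_less_one, of "k * m"]
  proof (intro conjI allI impI notI)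
    fix z :: complex assume z: "z \<noteq> 0"
    have i1: "alg_invertible (peval ([:z ^ k:] - monom 1 k) u)"
      unfolding peval2 using H1[of "z ^ k"] z by simp
    have p1: "poly ([:z ^ k:] - monom 1 k) z = 0" unfolding poly2 by simp
    show "alg_invertible (ofc z - u ^ 1)" using poly_root_inv[OF p1 i1] by simp
    show "alg_invertible (ofc z - (b ^ 1 - b ^ (1 * (k * m + 1))))"
      unfolding peval3[symmetric]
    proof (rule poly_all_roots_inv)
      show "[:z:] - monom 1 1 + monom 1 (1 * (k * m + 1)) \<noteq> 0" using z by (intro nz_poly) (simp add: poly_monom)
      fix t assume t: "poly ([:z:] - monom 1 1 + monom 1 (1 * (k * m + 1))) t = 0"
      then have t': "z - t + t ^ (k * m + 1) = 0" by (simp add: poly_monom)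
      have t0: "t \<noteq> 0" using t' z by auto
      define s where "s = t ^ k - (t ^ k) ^ (m + 1)"
      show "alg_invertible (ofc t - b)"
      proof (cases "s = 0")
        case False
        have "alg_invertible (peval ([:s:] - monom 1 k + monom 1 (k * (m + 1))) b)"
          unfolding peval3 using H1[OF False] by simp
        moreover have "poly ([:s:] - monom 1 k + monom 1 (k * (m + 1))) t = 0"
          unfolding poly3 s_def power_mult by simp
        ultimately show ?thesis by (intro poly_root_inv)
      next
        case True
        have tk: "t ^ k \<noteq> 0" using t0 by simp
        have "t ^ k * (t ^ k) ^ m = t ^ k * 1" using True unfolding s_def by simp
        then have "(t ^ k) ^ m = 1" using tk by (metis mult_left_cancel)
        then have "t ^ (k * m) = 1" by (simp add: power_mult)
        then have e: "t ^ (k * m + 1) = t" by simp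
        have "z - t + t = 0" using t' unfolding e .
        then show ?thesis using z by simp
      qed
    qed
  next
    assume A: "alg_invertible (u ^ 1 + p) \<and> alg_invertible (b ^ 1 - b ^ (1 * (k * m + 1)) + (1 - p))"
    have "alg_invertible (u ^ k + p)" using A upow[OF k] inv_power2[of "u + p" k] by simp
    moreover have "alg_invertible (b ^ k - b ^ (k * (m + 1)) + (1 - p))"
    proof -
      have "b ^ 1 - b ^ (1 * (k * m + 1)) + (1 - p) = (b ^ 1 + (1 - p)) * (1 - b ^ (k * m))"
        using fac[of 1 "k * m"] k m by simp
      then have i1: "alg_invertible (1 - b ^ (k * m))"
        using A Bpow_inv[of 1] inv_factor_left by (metis zero_less_one)
      have "b ^ k - b ^ (k * (m + 1)) + (1 - p) = (b ^ k + (1 - p)) * (1 - b ^ (k * m))"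
        using fac[of k "k * m"] k m by (simp add: algebra_simps)
      then show ?thesis using inv_mult[OF Bpow_inv[OF k] i1] by simp
    qed
    ultimately show False using H2 by blast
  qed
  then show ?thesis by simp
qed

end


lemma B_inv:
  fixes a x :: "'a::complex_banach_algebra_1"
  assumes xax: "x * a * x = x" and ax: "a * x = x * a"
  shows "alg_invertible (a * (a * x) + (1 - a * x))"
proof -
  define p where "p = a * x"
  have px: "p * x = x" unfolding p_def using xax ax by (metis mult.assoc)
  have xp: "x * p = x" unfolding p_def using xax by (simp add: mult.assoc)
  have pp: "p * p = p" unfolding p_def using xp by (metis mult.assoc p_def)
  have pa: "p * a = a * p" unfolding p_def using ax by (metis mult.assoc)
  have xa: "x * a = p" unfolding p_def using ax by simp
  have "(a * p + (1 - p)) * (x + (1 - p)) = a * (p * x) + (a * p - a * (p * p)) + (x - p * x) + (1 - p - p + p * p)"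
    by (simp add: algebra_simps)
  also have "\<dots> = 1" using px pp unfolding p_def by simp
  finally have r: "(a * p + (1 - p)) * (x + (1 - p)) = 1" .
  have "(x + (1 - p)) * (a * p + (1 - p)) = (x * a) * p + (x - x * p) + (a * p - p * a * p) + (1 - p - p + p * p)"
    by (simp add: algebra_simps)
  also have "\<dots> = 1" using xa xp pp pa by (simp add: mult.assoc)
  finally have l: "(x + (1 - p)) * (a * p + (1 - p)) = 1" .
  show ?thesis using l r unfolding alg_invertible_def p_def by blast
qed

lemma pow_p:
  fixes a p :: "'a::ring_1"
  assumes "p * p = p" "a * p = p * a" "j > 0"
  shows "(a * p) ^ j = a ^ j * p"
  using power_mult_comm[OF assms(2), of j] idem_power[OF assms(1,3)] by simp

lemma direction1:
  fixes a :: "'a::complex_banach_algebra_1"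
  assumes g: "gpi_Hirano_invertible a" and k: "k > 0"
  shows "gpi_Hirano_invertible (a ^ k)"
proof -
  obtain x n where xax: "x * a * x = x" and ax: "a * x = x * a" and n: "n > 0"
    and q: "quasinilpotent (a - a ^ (n + 2) * x)"
    using g unfolding gpi_Hirano_invertible_def by blast
  define p where "p = a * x"
  have xp: "x * p = x" unfolding p_def using xax by (simp add: mult.assoc)
  have pp: "p * p = p" unfolding p_def using xp by (metis mult.assoc p_def)
  have pa: "a * p = p * a" unfolding p_def using ax by (metis mult.assoc)
  interpret core a p
    using pp pa B_inv[OF xax ax] unfolding p_def by unfold_locales auto
  have bpow: "j > 0 \<Longrightarrow> b ^ j = a ^ j * p" for j unfolding b_def by (rule pow_p[OF pp pa])
  have ub_a: "u + b = a" unfolding u_def by simp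
  have "a ^ (n + 2) = a ^ (n + 1) * a" using power_Suc2[of a "n + 1"] by simp
  then have "a ^ (n + 2) * x = a ^ (n + 1) * p" unfolding p_def by (simp add: mult.assoc)
  also have "\<dots> = b ^ (n + 1)" using bpow[of "n + 1"] by simp
  finally have "a - a ^ (n + 2) * x = u + (b - b ^ (n + 1))" using ub_a by (simp add: algebra_simps)
  with q have "quasinilpotent (u + (b - b ^ (n + 1)))" by simp
  from fwd[OF n k this] have Q: "quasinilpotent (u ^ k + (b ^ k - b ^ (k * (n + 1))))" .
  have uk: "u ^ k + b ^ k = a ^ k" using orth_power_sum[OF ub k] ub_a by simp
  have "(a ^ k) ^ (n + 2) * x ^ k = a ^ (k * (n + 1)) * (a ^ k * x ^ k)"
  proof -
    have e: "k * (n + 2) = k * (n + 1) + k" by simp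
    have "(a ^ k) ^ (n + 2) = a ^ (k * (n + 2))" by (rule power_mult[symmetric])
    also have "\<dots> = a ^ (k * (n + 1) + k)" by (simp only: e)
    finally have "(a ^ k) ^ (n + 2) = a ^ (k * (n + 1) + k)" .
    then show ?thesis by (simp add: power_add mult.assoc)
  qed
  also have "a ^ k * x ^ k = p" unfolding p_def using power_mult_comm[OF ax, of k] idem_power[OF pp k]
    unfolding p_def by simp
  also have "a ^ (k * (n + 1)) * p = b ^ (k * (n + 1))" using bpow[of "k * (n + 1)"] k by simp
  finally have "a ^ k - (a ^ k) ^ (n + 2) * x ^ k = u ^ k + (b ^ k - b ^ (k * (n + 1)))"
    using uk by (simp add: algebra_simps)
  with Q have Q': "quasinilpotent (a ^ k - (a ^ k) ^ (n + 2) * x ^ k)" by simp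
  have xa: "x * a = a * x" using ax by simp
  have "x ^ k * a ^ k * x ^ k = (x * a * x) ^ k"
  proof -
    have "x ^ k * a ^ k = (x * a) ^ k" using power_mult_comm[OF xa, of k] by simp
    moreover have "(x * a) * x = x * (x * a)" using ax by (simp add: mult.assoc)
    ultimately show ?thesis using power_mult_comm[of "x * a" x k] by simp
  qed
  then have "x ^ k * a ^ k * x ^ k = x ^ k" using xax by simp
  moreover have "a ^ k * x ^ k = x ^ k * a ^ k"
    using power_mult_comm[OF ax, of k] power_mult_comm[OF xa, of k] ax by simp
  ultimately show ?thesis unfolding gpi_Hirano_invertible_def using Q' n by blast
qed


lemma direction2:
  fixes a :: "'a::complex_banach_algebra_1"
  assumes g: "gpi_Hirano_invertible (a ^ k)" and k: "k > 0"
  shows "gpi_Hirano_invertible a"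
proof -
  define c where "c = a ^ k"
  obtain y m where ycy: "y * c * y = y" and cy: "c * y = y * c" and m: "m > 0"
    and q: "quasinilpotent (c - c ^ (m + 2) * y)"
    using g unfolding gpi_Hirano_invertible_def c_def by blast
  define p where "p = c * y"
  define qq where "qq = 1 - p"
  have yp: "y * p = y" unfolding p_def using ycy by (simp add: mult.assoc)
  have py: "p * y = y" unfolding p_def using ycy cy by (metis mult.assoc)
  have pp: "p * p = p" unfolding p_def using yp by (metis mult.assoc p_def)
  have cp: "c * p = p * c" unfolding p_def using cy by (metis mult.assoc)
  have ca: "c * a = a * c" unfolding c_def by (simp add: power_commutes)
  have qqq: "qq * qq = qq" unfolding qq_def using pp by (simp add: algebra_simps)
  have qp: "qq * p = 0" "p * qq = 0" unfolding qq_def using pp by (simp_all add: algebra_simps)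
  have cq: "c * qq = qq * c" unfolding qq_def using cp by (simp add: algebra_simps)
  define uc where "uc = qq * c"
  define bc where "bc = c * p"
  have ucp: "uc * p = 0" "p * uc = 0" unfolding uc_def using qp cp
    by (metis mult.assoc mult_zero_left mult_zero_right)+
  have bcp: "bc * p = bc" "p * bc = bc" unfolding bc_def using pp cp by (metis mult.assoc)+
  define vc where "vc = bc - bc ^ (m + 1)"
  have bcm1: "bc ^ (m + 1) * p = bc ^ (m + 1)"
    using bcp(1) by (simp only: Suc_eq_plus1[symmetric] power_Suc2 mult.assoc)
  have bcm2: "p * bc ^ (m + 1) = bc ^ (m + 1)"
    using bcp(2) by (simp only: Suc_eq_plus1[symmetric] power_Suc mult.assoc[symmetric])
  have vcp: "vc * p = vc" "p * vc = vc" unfolding vc_def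
    using bcp bcm1 bcm2 by (simp_all add: left_diff_distrib right_diff_distrib)
  have "c ^ (m + 2) * y = c ^ (m + 1) * p"
  proof -
    have "c ^ (m + 2) = c ^ (m + 1) * c" using power_Suc2[of c "m + 1"] by simp
    then show ?thesis unfolding p_def by (simp add: mult.assoc)
  qed
  also have "\<dots> = bc ^ (m + 1)" unfolding bc_def using pow_p[OF pp cp, of "m + 1"] by simp
  finally have "c - c ^ (m + 2) * y = uc + vc"
    unfolding uc_def vc_def bc_def qq_def by (simp add: algebra_simps cp)
  with q have qv: "quasinilpotent (uc + vc)" by simp
  note D = iffD1[OF decomp_qnil[OF pp ucp vcp] qv]
  have Bc: "alg_invertible (bc + qq)"
    using B_inv[OF ycy cy] unfolding bc_def qq_def p_def .
  have quc: "quasinilpotent uc"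
    unfolding quasinilpotent_iff
  proof (intro conjI allI impI notI)
    fix z :: complex assume "z \<noteq> 0" then show "alg_invertible (ofc z - uc)" using D by blast
  next
    assume iu: "alg_invertible uc"
    have "p = ainv uc * uc * p" using ainv(2)[OF iu] by simp
    also have "\<dots> = 0" using ucp by (simp add: mult.assoc)
    finally have p0: "p = 0" .
    then have "uc + vc = uc" unfolding vc_def bc_def by simp
    then show False using qv iu unfolding quasinilpotent_iff by simp
  qed
  define X where "X = qq * a * p"
  define Y where "Y = p * a * qq"
  have "uc * X = X * (bc + qq)"
  proof -
    have "uc * X = qq * (c * (qq * (a * p)))" unfolding uc_def X_def by (simp add: mult.assoc)
    also have "\<dots> = qq * (qq * (c * (a * p)))" by (simp only: mult.assoc[symmetric] cq)
    also have "\<dots> = qq * (a * (c * p))" by (simp only: mult.assoc[symmetric] qqq ca)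
    also have "\<dots> = X * (bc + qq)"
    proof -
      have "X * (bc + qq) = qq * (a * ((p * c) * p)) + qq * (a * (p * qq))"
        unfolding X_def bc_def by (simp add: distrib_left cp mult.assoc)
      also have "\<dots> = qq * (a * (c * p))"
      proof -
        have pcp: "(p * c) * p = c * p" using pp cp by (metis mult.assoc)
        show ?thesis unfolding pcp qp(2) by simp
      qed
      finally show ?thesis by simp
    qed
    finally show ?thesis .
  qed
  then have X0: "X = 0" by (rule sylv1[OF quc Bc])
  have "Y * uc = (bc + qq) * Y"
  proof -
    have "Y * uc = p * (a * (qq * (qq * c)))" unfolding uc_def Y_def by (simp add: mult.assoc)
    also have "\<dots> = p * (a * (qq * c))"
      using qqq by (metis mult.assoc)
    also have "\<dots> = p * (c * (a * qq))"
    proof -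
      have ca2: "c * (a * z) = a * (c * z)" for z using ca by (metis mult.assoc)
      show ?thesis unfolding cq[symmetric] ca2 ..
    qed
    also have "\<dots> = (bc + qq) * Y"
    proof -
      have "(bc + qq) * Y = (c * p) * (p * (a * qq)) + (qq * p) * (a * qq)"
        unfolding Y_def bc_def by (simp add: distrib_right mult.assoc)
      also have "\<dots> = p * (c * (a * qq))"
      proof -
        have cpp: "(c * p) * p = p * c" using pp cp by (metis mult.assoc)
        show ?thesis unfolding qp(1) mult.assoc[symmetric] cpp by simp
      qed
      finally show ?thesis by simp
    qed
    finally show ?thesis .
  qed
  then have Y0: "Y = 0" by (rule sylv2[OF quc Bc])
  have ap: "a * p = p * a"
  proof -
    have "a * p = p * a * p + X" unfolding X_def qq_def by (simp add: algebra_simps)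
    moreover have "p * a = p * a * p + Y" unfolding Y_def qq_def by (simp add: algebra_simps)
    ultimately show ?thesis using X0 Y0 by simp
  qed
  have ay: "a * y = y * a"
  proof -
    have "y * a = y * (p * a)" using yp by (simp add: mult.assoc[symmetric])
    also have "\<dots> = y * (a * p)" using ap by simp
    also have "\<dots> = y * a * c * y" unfolding p_def by (simp add: mult.assoc)
    also have "\<dots> = y * c * a * y"
    proof -
      have ca2: "c * (a * z) = a * (c * z)" for z using ca by (simp add: mult.assoc[symmetric])
      show ?thesis by (simp add: mult.assoc ca2)
    qed
    also have "\<dots> = p * a * y" unfolding p_def using cy by simp
    also have "\<dots> = a * p * y" using ap by simp
    also have "\<dots> = a * y" using py by (simp add: mult.assoc)
    finally show ?thesis by simp
  qed
  define x where "x = a ^ (k - 1) * y"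
  have ak: "a * a ^ (k - 1) = c" unfolding c_def using k by (cases k) simp_all
  have axp: "a * x = p" unfolding x_def p_def using ak by (simp add: mult.assoc[symmetric])
  have ax: "a * x = x * a"
  proof -
    have "x * a = a ^ (k - 1) * (a * y)" unfolding x_def using ay by (simp add: mult.assoc)
    also have "\<dots> = a * x" unfolding x_def by (simp add: mult.assoc[symmetric] power_commutes)
    finally show ?thesis by simp
  qed
  have xax: "x * a * x = x"
  proof -
    have "x * a * x = p * x" using ax axp by simp
    also have "\<dots> = a ^ (k - 1) * (p * y)" unfolding x_def
      using comm_power[OF ap, of "k - 1"] by (simp add: mult.assoc[symmetric])
    finally show ?thesis using py unfolding x_def by simp
  qed
  interpret core a p
    using pp ap B_inv[OF xax ax] unfolding axp by unfold_locales auto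
  have bpow: "j > 0 \<Longrightarrow> b ^ j = a ^ j * p" for j unfolding b_def by (rule pow_p[OF pp ap])
  have ub_a: "u + b = a" unfolding u_def by simp
  have uk: "u ^ k + b ^ k = c" using orth_power_sum[OF ub k] ub_a unfolding c_def by simp
  have e1: "a ^ (k * (m + 1)) = c ^ (m + 1)" unfolding c_def by (rule power_mult)
  have "b ^ (k * (m + 1)) = a ^ (k * (m + 1)) * p"
    by (rule bpow) (use k in simp)
  also have "\<dots> = c ^ (m + 1) * p" unfolding e1 ..
  also have "\<dots> = c ^ (m + 2) * y"
  proof -
    have "c ^ (m + 2) = c ^ (m + 1) * c" using power_Suc2[of c "m + 1"] by simp
    then show ?thesis unfolding p_def by (simp add: mult.assoc)
  qed
  finally have "u ^ k + (b ^ k - b ^ (k * (m + 1))) = c - c ^ (m + 2) * y"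
    using uk by (simp add: algebra_simps)
  with q have "quasinilpotent (u ^ k + (b ^ k - b ^ (k * (m + 1))))" by simp
  from bwd[OF m k this] have Q: "quasinilpotent (u + (b - b ^ (k * m + 1)))" .
  have "a ^ (k * m + 2) * x = a ^ (k * m + 1) * p"
  proof -
    have "a ^ (k * m + 2) = a ^ (k * m + 1) * a" using power_Suc2[of a "k * m + 1"] by simp
    then show ?thesis using axp by (simp add: mult.assoc)
  qed
  also have "\<dots> = b ^ (k * m + 1)" using bpow[of "k * m + 1"] by simp
  finally have "a - a ^ (k * m + 2) * x = u + (b - b ^ (k * m + 1))"
    using ub_a by (simp add: algebra_simps)
  with Q have "quasinilpotent (a - a ^ (k * m + 2) * x)" by simp
  moreover have "k * m > 0" using k m by simp
  ultimately show ?thesis unfolding gpi_Hirano_invertible_def using xax ax by blast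
qed

theorem corollary2p3:
  fixes a :: "'a::complex_banach_algebra_1" and k :: nat
  assumes "k > 0"
  shows "gpi_Hirano_invertible a \<longleftrightarrow> gpi_Hirano_invertible (a ^ k)"
  using direction1[OF _ assms] direction2[OF _ assms] by blast

end
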